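(* Let $\mathcal P$ be a Fitting program over a bilattice $\mathcal B$ and $\alpha\in\{\mathcal F,\mathcal T,\mathcal U,\mathcal I\}$. Then $Fix^{\alpha}_{\mathcal U}=Fix^{\alpha}_{\mathcal F}\otimes Fix^{\alpha}_{\mathcal T}$, $Fix^{\alpha}_{\mathcal I}=Fix^{\alpha}_{\mathcal F}\oplus Fix^{\alpha}_{\mathcal T}$, $Fix^{\alpha}_{\mathcal F}=Fix^{\alpha}_{\mathcal U}\wedge Fix^{\alpha}_{\mathcal I}$, $Fix^{\alpha}_{\mathcal T}=Fix^{\alpha}_{\mathcal U}\vee Fix^{\alpha}_{\mathcal I}$.
   Context: A bilattice $\langle\mathcal B,\le_t,\le_k\rangle$ is a nonempty set with two partial orders, each making $\mathcal B$ a lattice with top and bottom. Under $\le_t$, meet and join are $\wedge,\vee$ (infinitary $\bigwedge,\bigvee$), bottom $\mathcal F$, top $\mathcal T$; under $\le_k$, meet and join are $\otimes,\oplus$ (infinitary $\bigotimes,\bigoplus$), bottom $\mathcal U$, top $\mathcal I$. Standing assumptions: $\mathcal B$ is complete for both orders, infinitely distributive (all finitary and infinitary distributive laws among the four operations hold), satisfies the infinitary interlacing conditions (each of $\wedge,\vee,\otimes,\oplus$ and their infinitary versions is monotone w.r.t. both orderings), and has a negation $\neg$ (an involution reversing $\le_t$ and preserving $\le_k$). A formula is built from literals ($A$ or $\neg A$) and elements of $\mathcal B$ using $\wedge,\vee,\otimes,\oplus,\exists,\forall$ (with built-in predicate $equal$). A clause is $P(x_1,\dots,x_n)\leftarrow\phi(x_1,\dots,x_n)$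 with the body's free variables among $x_1,\dots,x_n$. A Fitting program is a finite set of clauses with no predicate letter heading more than one clause; Inst-$\mathcal P$ is its set of ground instances. $\mathcal V(\mathcal B)$: maps from ground atoms to $\mathcal B$ with pointwise orders/operations. Valuations extend to closed formulas compositionally ($v(\beta)=\beta$, connectives pointwise, $\exists$ as $\bigvee$, $\forall$ as $\bigwedge$ over closed-term instances, $v(equal(s,t))=\mathcal T$ if $s=t$ else $\mathcal F$). The contrajoin $v\bigtriangleup w$ evaluates likewise but gives $A$ the value $v(A)$ and $\neg A$ the value $\neg w(A)$. $\Psi_{\mathcal P}^{\alpha}(v,w)(A)=\alpha$ if $A$ heads no member of Inst-$\mathcal P$, and $=(v\bigtriangleup w)(B)$ if $A\leftarrow B\in$ Inst-$\mathcal P$. $\Psi'^{\alpha}_{\mathcal P}(v)$ is the $\le_t$-least (resp. $\le_t$-greatest, $\le_k$-least, $\le_k$-greatest) fixpoint of $x\mapsto\Psi_{\mathcal P}^{\alpha}(x,v)$ when $\alpha=\mathcal F$ (resp. $\mathcal T,\mathcal U,\mathcal I$), obtained as the limit of the transfinite iteration from the constant valuation $\alpha$. $Fix^{\alpha}_{\mathcal U}$ and $Fix^{\alpha}_{\mathcal I}$ are the $\le_k$-least and $\le_k$-greatest fixpoints of $\Psi'^{\alpha}_{\mathcal P}$ (which is $\le_k$-monotone). $Fix^{\alpha}_{\mathcal F}$ and $Fix^{\alpha}_{\mathcal T}$ are the extreme oscillation points of the $\le_t$-anti-monotone map $\Psi'^{\alpha}_{\mathcal P}$ on $(\mathcal V(\mathcal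 B),\le_t)$, i.e. the $\le_t$-least and $\le_t$-greatest fixpoints of $\Psi'^{\alpha}_{\mathcal P}\circ\Psi'^{\alpha}_{\mathcal P}$. *)

theory Defs
  imports Main
begin

text \<open>The truth order \<le>t is the type's own order (a complete lattice: inf/sup are
  the binary meet/join, Inf/Sup the infinitary ones, bot = F, top = T).
  The knowledge order \<le>k is the parameter kle, with binary meet/join
  kmeet/kjoin (otimes/oplus) and infinitary kInf/kSup; neg is the negation.\<close>

class complete_interlaced_bilattice = complete_lattice +
  fixes kle :: "'a \<Rightarrow> 'a \<Rightarrow> bool"
    and kmeet :: "'a \<Rightarrow> 'a \<Rightarrow> 'a"
    and kjoin :: "'a \<Rightarrow> 'a \<Rightarrow> 'a"
    and kInf :: "'a set \<Rightarrow> 'a"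
    and kSup :: "'a set \<Rightarrow> 'a"
    and neg :: "'a \<Rightarrow> 'a"
  assumes kle_refl: "kle x x"
    and kle_trans: "kle x y \<Longrightarrow> kle y z \<Longrightarrow> kle x z"
    and kle_antisym: "kle x y \<Longrightarrow> kle y x \<Longrightarrow> x = y"
    and kmeet_lower1: "kle (kmeet x y) x"
    and kmeet_lower2: "kle (kmeet x y) y"
    and kmeet_greatest: "kle z x \<Longrightarrow> kle z y \<Longrightarrow> kle z (kmeet x y)"
    and kjoin_upper1: "kle x (kjoin x y)"
    and kjoin_upper2: "kle y (kjoin x y)"
    and kjoin_least: "kle x z \<Longrightarrow> kle y z \<Longrightarrow> kle (kjoin x y) z"
    and kInf_lower: "x \<in> S \<Longrightarrow> kle (kInf S) x"
    and kInf_greatest: "(\<And>x. x \<in> S \<Longrightarrow> kle z x) \<Longrightarrow> kle z (kInf S)"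
    and kSup_upper: "x \<in> S \<Longrightarrow> kle x (kSup S)"
    and kSup_least: "(\<And>x. x \<in> S \<Longrightarrow> kle x z) \<Longrightarrow> kle (kSup S) z"
    and inf_sup_distr: "inf x (sup y z) = sup (inf x y) (inf x z)"
    and inf_kmeet_distr: "inf x (kmeet y z) = kmeet (inf x y) (inf x z)"
    and inf_kjoin_distr: "inf x (kjoin y z) = kjoin (inf x y) (inf x z)"
    and sup_inf_distr: "sup x (inf y z) = inf (sup x y) (sup x z)"
    and sup_kmeet_distr: "sup x (kmeet y z) = kmeet (sup x y) (sup x z)"
    and sup_kjoin_distr: "sup x (kjoin y z) = kjoin (sup x y) (sup x z)"
    and kmeet_inf_distr: "kmeet x (inf y z) = inf (kmeet x y) (kmeet x z)"
    and kmeet_sup_distr: "kmeet x (sup y z) = sup (kmeet x y) (kmeet x z)"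
    and kmeet_kjoin_distr: "kmeet x (kjoin y z) = kjoin (kmeet x y) (kmeet x z)"
    and kjoin_inf_distr: "kjoin x (inf y z) = inf (kjoin x y) (kjoin x z)"
    and kjoin_sup_distr: "kjoin x (sup y z) = sup (kjoin x y) (kjoin x z)"
    and kjoin_kmeet_distr: "kjoin x (kmeet y z) = kmeet (kjoin x y) (kjoin x z)"
    and inf_Sup_distr: "S \<noteq> {} \<Longrightarrow> inf x (Sup S) = Sup (inf x ` S)"
    and inf_kInf_distr: "S \<noteq> {} \<Longrightarrow> inf x (kInf S) = kInf (inf x ` S)"
    and inf_kSup_distr: "S \<noteq> {} \<Longrightarrow> inf x (kSup S) = kSup (inf x ` S)"
    and sup_Inf_distr: "S \<noteq> {} \<Longrightarrow> sup x (Inf S) = Inf (sup x ` S)"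
    and sup_kInf_distr: "S \<noteq> {} \<Longrightarrow> sup x (kInf S) = kInf (sup x ` S)"
    and sup_kSup_distr: "S \<noteq> {} \<Longrightarrow> sup x (kSup S) = kSup (sup x ` S)"
    and kmeet_Inf_distr: "S \<noteq> {} \<Longrightarrow> kmeet x (Inf S) = Inf (kmeet x ` S)"
    and kmeet_Sup_distr: "S \<noteq> {} \<Longrightarrow> kmeet x (Sup S) = Sup (kmeet x ` S)"
    and kmeet_kSup_distr: "S \<noteq> {} \<Longrightarrow> kmeet x (kSup S) = kSup (kmeet x ` S)"
    and kjoin_Inf_distr: "S \<noteq> {} \<Longrightarrow> kjoin x (Inf S) = Inf (kjoin x ` S)"
    and kjoin_Sup_distr: "S \<noteq> {} \<Longrightarrow> kjoin x (Sup S) = Sup (kjoin x ` S)"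
    and kjoin_kInf_distr: "S \<noteq> {} \<Longrightarrow> kjoin x (kInf S) = kInf (kjoin x ` S)"
    (* interlacing: every operation is monotone w.r.t. both orders
       (the remaining cases hold automatically by the lattice laws) *)
    and inf_kmono: "kle x x' \<Longrightarrow> kle y y' \<Longrightarrow> kle (inf x y) (inf x' y')"
    and sup_kmono: "kle x x' \<Longrightarrow> kle y y' \<Longrightarrow> kle (sup x y) (sup x' y')"
    and kmeet_tmono: "x \<le> x' \<Longrightarrow> y \<le> y' \<Longrightarrow> kmeet x y \<le> kmeet x' y'"
    and kjoin_tmono: "x \<le> x' \<Longrightarrow> y \<le> y' \<Longrightarrow> kjoin x y \<le> kjoin x' y'"
    and Inf_kmono: "(\<And>i. i \<in> I \<Longrightarrow> kle (f i) (g i)) \<Longrightarrow> kle (Inf (f ` I)) (Inf (g ` I))"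
    and Sup_kmono: "(\<And>i. i \<in> I \<Longrightarrow> kle (f i) (g i)) \<Longrightarrow> kle (Sup (f ` I)) (Sup (g ` I))"
    and kInf_tmono: "(\<And>i. i \<in> I \<Longrightarrow> f i \<le> g i) \<Longrightarrow> kInf (f ` I) \<le> kInf (g ` I)"
    and kSup_tmono: "(\<And>i. i \<in> I \<Longrightarrow> f i \<le> g i) \<Longrightarrow> kSup (f ` I) \<le> kSup (g ` I)"
    and neg_neg: "neg (neg x) = x"
    and neg_tanti: "x \<le> y \<Longrightarrow> neg y \<le> neg x"
    and neg_kmono: "kle x y \<Longrightarrow> kle (neg x) (neg y)"

definition bF :: "'b::complete_interlaced_bilattice" where "bF = bot"
definition bT :: "'b::complete_interlaced_bilattice" where "bT = top"
definition bU :: "'b::complete_interlaced_bilattice" where "bU = kInf UNIV"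
definition bI :: "'b::complete_interlaced_bilattice" where "bI = kSup UNIV"

datatype mode = mF | mT | mU | mI

fun mode_val :: "mode \<Rightarrow> 'b::complete_interlaced_bilattice" where
  "mode_val mF = bF" | "mode_val mT = bT" | "mode_val mU = bU" | "mode_val mI = bI"

datatype 'f trm = Var nat | Fn 'f "'f trm list"

text \<open>Closed terms (elements of the Herbrand universe).\<close>
datatype 'f gtrm = GFn 'f "'f gtrm list"

fun ground :: "(nat \<Rightarrow> 'f gtrm) \<Rightarrow> 'f trm \<Rightarrow> 'f gtrm" where
  "ground \<sigma> (Var n) = \<sigma> n"
| "ground \<sigma> (Fn f ts) = GFn f (map (ground \<sigma>) ts)"

fun tvars :: "'f trm \<Rightarrow> nat set" where
  "tvars (Var n) = {n}"
| "tvars (Fn f ts) = (\<Union>t\<in>set ts. tvars t)"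

datatype ('p, 'f, 'b) fmla =
    FPos 'p "'f trm list"
  | FNeg 'p "'f trm list"
  | FEq "'f trm" "'f trm"          (* built-in atom equal(s,t) *)
  | FNEq "'f trm" "'f trm"
  | FConst 'b
  | FAnd "('p, 'f, 'b) fmla" "('p, 'f, 'b) fmla"
  | FOr "('p, 'f, 'b) fmla" "('p, 'f, 'b) fmla"
  | FOtimes "('p, 'f, 'b) fmla" "('p, 'f, 'b) fmla"
  | FOplus "('p, 'f, 'b) fmla" "('p, 'f, 'b) fmla"
  | FEx nat "('p, 'f, 'b) fmla"
  | FAll nat "('p, 'f, 'b) fmla"

fun fvars :: "('p, 'f, 'b) fmla \<Rightarrow> nat set" where
  "fvars (FPos p ts) = (\<Union>t\<in>set ts. tvars t)"
| "fvars (FNeg p ts) = (\<Union>t\<in>set ts. tvars t)"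
| "fvars (FEq s t) = tvars s \<union> tvars t"
| "fvars (FNEq s t) = tvars s \<union> tvars t"
| "fvars (FConst b) = {}"
| "fvars (FAnd a b) = fvars a \<union> fvars b"
| "fvars (FOr a b) = fvars a \<union> fvars b"
| "fvars (FOtimes a b) = fvars a \<union> fvars b"
| "fvars (FOplus a b) = fvars a \<union> fvars b"
| "fvars (FEx x a) = fvars a - {x}"
| "fvars (FAll x a) = fvars a - {x}"

text \<open>A clause P(x1,...,xn) \<leftarrow> body is (P, [x1,...,xn], body).\<close>
type_synonym ('p, 'f, 'b) clause = "'p \<times> nat list \<times> ('p, 'f, 'b) fmla"

definition fitting_program :: "('p, 'f, 'b) clause set \<Rightarrow> bool" where
  "fitting_program P \<longleftrightarrow> finite P
     \<and> (\<forall>(p, xs, \<phi>) \<in> P. distinct xs \<and> fvars \<phi> \<subseteq> set xs)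
     \<and> (\<forall>c1\<in>P. \<forall>c2\<in>P. fst c1 = fst c2 \<longrightarrow> c1 = c2)"

type_synonym ('p, 'f) gatom = "'p \<times> 'f gtrm list"
type_synonym ('p, 'f, 'b) valuation = "('p, 'f) gatom \<Rightarrow> 'b"

text \<open>Contrajoin evaluation (v \<triangle> w) of the closed formula obtained by
  instantiating the free variables of a formula according to \<sigma>: positive atoms
  are evaluated in v, negated atoms via w.  The ordinary valuation is ev v v.\<close>
fun cev :: "('p, 'f, 'b::complete_interlaced_bilattice) valuation \<Rightarrow> ('p, 'f, 'b) valuation
             \<Rightarrow> (nat \<Rightarrow> 'f gtrm) \<Rightarrow> ('p, 'f, 'b) fmla \<Rightarrow> 'b" where
  "cev v w \<sigma> (FPos p ts) = v (p, map (ground \<sigma>) ts)"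
| "cev v w \<sigma> (FNeg p ts) = neg (w (p, map (ground \<sigma>) ts))"
| "cev v w \<sigma> (FEq s t) = (if ground \<sigma> s = ground \<sigma> t then bT else bF)"
| "cev v w \<sigma> (FNEq s t) = neg (if ground \<sigma> s = ground \<sigma> t then bT else bF)"
| "cev v w \<sigma> (FConst b) = b"
| "cev v w \<sigma> (FAnd a b) = inf (cev v w \<sigma> a) (cev v w \<sigma> b)"
| "cev v w \<sigma> (FOr a b) = sup (cev v w \<sigma> a) (cev v w \<sigma> b)"
| "cev v w \<sigma> (FOtimes a b) = kmeet (cev v w \<sigma> a) (cev v w \<sigma> b)"
| "cev v w \<sigma> (FOplus a b) = kjoin (cev v w \<sigma> a) (cev v w \<sigma> b)"
| "cev v w \<sigma> (FEx x a) = Sup (range (\<lambda>g. cev v w (\<sigma>(x := g)) a))"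
| "cev v w \<sigma> (FAll x a) = Inf (range (\<lambda>g. cev v w (\<sigma>(x := g)) a))"

text \<open>Ground instances: (A, (body, \<sigma>)) stands for the ground clause
  A \<leftarrow> body\<sigma>, where \<sigma> assigns closed terms to the variables.\<close>
definition inst_prog :: "('p, 'f, 'b) clause set
    \<Rightarrow> (('p, 'f) gatom \<times> (('p, 'f, 'b) fmla \<times> (nat \<Rightarrow> 'f gtrm))) set" where
  "inst_prog P = {((p, map \<sigma> xs), (\<phi>, \<sigma>)) | p xs \<phi> \<sigma>. (p, xs, \<phi>) \<in> P}"

definition Psi :: "('p, 'f, 'b::complete_interlaced_bilattice) clause set \<Rightarrow> mode
    \<Rightarrow> ('p, 'f, 'b) valuation \<Rightarrow> ('p, 'f, 'b) valuation \<Rightarrow> ('p, 'f, 'b) valuation" where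
  "Psi P m v w A =
     (if \<exists>B. (A, B) \<in> inst_prog P
      then (let (\<phi>, \<sigma>) = (SOME B. (A, B) \<in> inst_prog P) in cev v w \<sigma> \<phi>)
      else mode_val m)"

text \<open>Pointwise knowledge order and pointwise otimes / oplus on valuations
  (pointwise \<le>t, \<and>, \<or> are the library's order, inf and sup on functions).\<close>
definition vkle :: "('a \<Rightarrow> 'b::complete_interlaced_bilattice) \<Rightarrow> ('a \<Rightarrow> 'b) \<Rightarrow> bool" where
  "vkle v w \<longleftrightarrow> (\<forall>A. kle (v A) (w A))"

definition vkmeet :: "('a \<Rightarrow> 'b::complete_interlaced_bilattice) \<Rightarrow> ('a \<Rightarrow> 'b) \<Rightarrow> 'a \<Rightarrow> 'b" where
  "vkmeet v w = (\<lambda>A. kmeet (v A) (w A))"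

definition vkjoin :: "('a \<Rightarrow> 'b::complete_interlaced_bilattice) \<Rightarrow> ('a \<Rightarrow> 'b) \<Rightarrow> 'a \<Rightarrow> 'b" where
  "vkjoin v w = (\<lambda>A. kjoin (v A) (w A))"

definition least_fp :: "('a \<Rightarrow> 'a \<Rightarrow> bool) \<Rightarrow> ('a \<Rightarrow> 'a) \<Rightarrow> 'a" where
  "least_fp R f = (THE x. f x = x \<and> (\<forall>y. f y = y \<longrightarrow> R x y))"

definition greatest_fp :: "('a \<Rightarrow> 'a \<Rightarrow> bool) \<Rightarrow> ('a \<Rightarrow> 'a) \<Rightarrow> 'a" where
  "greatest_fp R f = (THE x. f x = x \<and> (\<forall>y. f y = y \<longrightarrow> R y x))"

fun Psi' :: "('p, 'f, 'b::complete_interlaced_bilattice) clause set \<Rightarrow> mode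
    \<Rightarrow> ('p, 'f, 'b) valuation \<Rightarrow> ('p, 'f, 'b) valuation" where
  "Psi' P mF v = least_fp (\<le>) (\<lambda>x. Psi P mF x v)"
| "Psi' P mT v = greatest_fp (\<le>) (\<lambda>x. Psi P mT x v)"
| "Psi' P mU v = least_fp vkle (\<lambda>x. Psi P mU x v)"
| "Psi' P mI v = greatest_fp vkle (\<lambda>x. Psi P mI x v)"

definition FixU :: "('p, 'f, 'b::complete_interlaced_bilattice) clause set \<Rightarrow> mode \<Rightarrow> ('p, 'f, 'b) valuation" where
  "FixU P m = least_fp vkle (Psi' P m)"

definition FixI :: "('p, 'f, 'b::complete_interlaced_bilattice) clause set \<Rightarrow> mode \<Rightarrow> ('p, 'f, 'b) valuation" where
  "FixI P m = greatest_fp vkle (Psi' P m)"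

definition FixF :: "('p, 'f, 'b::complete_interlaced_bilattice) clause set \<Rightarrow> mode \<Rightarrow> ('p, 'f, 'b) valuation" where
  "FixF P m = least_fp (\<le>) (Psi' P m \<circ> Psi' P m)"

definition FixT :: "('p, 'f, 'b::complete_interlaced_bilattice) clause set \<Rightarrow> mode \<Rightarrow> ('p, 'f, 'b) valuation" where
  "FixT P m = greatest_fp (\<le>) (Psi' P m \<circ> Psi' P m)"

end

theory Submission
  imports Defs
begin

context complete_interlaced_bilattice
begin

lemma kmeet_kmono: "kle x x' \<Longrightarrow> kle y y' \<Longrightarrow> kle (kmeet x y) (kmeet x' y')"
  by (meson kle_trans kmeet_greatest kmeet_lower1 kmeet_lower2)

lemma kjoin_kmono: "kle x x' \<Longrightarrow> kle y y' \<Longrightarrow> kle (kjoin x y) (kjoin x' y')"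
  by (meson kle_trans kjoin_least kjoin_upper1 kjoin_upper2)

lemma kmeet_idem: "kmeet x x = x"
  by (meson kle_antisym kle_refl kmeet_greatest kmeet_lower1)

lemma kjoin_idem: "kjoin x x = x"
  by (meson kle_antisym kle_refl kjoin_least kjoin_upper1)

lemma kjoin_kmeet_absorb: "kjoin a (kmeet a b) = a"
  by (meson kle_antisym kle_refl kjoin_least kjoin_upper1 kmeet_lower1)

lemma kjoin_absorb: "kle x y \<Longrightarrow> kjoin x y = y"
  by (meson kle_antisym kle_refl kjoin_least kjoin_upper2)

lemma L1: assumes "a \<le> y" "y \<le> b" shows "kle (kmeet a b) y"
proof -
  define u where "u = kmeet a b"
  have h1: "kle (sup u y) y"
  proof -
    have "kle (sup u y) (sup a y)" using sup_kmono[OF kmeet_lower1 kle_refl] unfolding u_def .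
    thus ?thesis using assms(1) by (simp add: sup_absorb2)
  qed
  have h2: "kle (inf u y) y"
  proof -
    have "kle (inf u y) (inf b y)" using inf_kmono[OF kmeet_lower2 kle_refl] unfolding u_def .
    thus ?thesis using assms(2) by (simp add: inf_absorb2)
  qed
  have h3: "kle (kjoin (sup u y) (inf u y)) y" by (rule kjoin_least[OF h1 h2])
  have h4: "kle u (inf (kjoin (sup u y) u) (kjoin (sup u y) y))"
    using inf_kmono[OF kjoin_upper2[of u "sup u y"] kjoin_upper1[of "sup u y" y]] by simp
  have h5: "inf (kjoin (sup u y) u) (kjoin (sup u y) y) = kjoin (sup u y) (inf u y)"
    by (simp add: kjoin_inf_distr)
  show ?thesis using kle_trans[OF h4[unfolded h5] h3] unfolding u_def .
qed

lemma L1': assumes "a \<le> y" "y \<le> b" shows "kle y (kjoin a b)"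
proof -
  define u where "u = kjoin a b"
  have h1: "kle y (sup u y)"
  proof -
    have "kle (sup a y) (sup u y)" using sup_kmono[OF kjoin_upper1 kle_refl] unfolding u_def .
    thus ?thesis using assms(1) by (simp add: sup_absorb2)
  qed
  have h2: "kle y (inf u y)"
  proof -
    have "kle (inf b y) (inf u y)" using inf_kmono[OF kjoin_upper2 kle_refl] unfolding u_def .
    thus ?thesis using assms(2) by (simp add: inf_absorb2)
  qed
  have h3: "kle y (kmeet (sup u y) (inf u y))" by (rule kmeet_greatest[OF h1 h2])
  have h4: "kle (inf (kmeet (sup u y) u) (kmeet (sup u y) y)) u"
    using inf_kmono[OF kmeet_lower2[of "sup u y" u] kmeet_lower1[of "sup u y" y]] by simp
  have h5: "inf (kmeet (sup u y) u) (kmeet (sup u y) y) = kmeet (sup u y) (inf u y)"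
    by (simp add: kmeet_inf_distr)
  show ?thesis using kle_trans[OF h3 h4[unfolded h5]] unfolding u_def .
qed

lemma L2: assumes "a \<le> b" shows "a \<le> kmeet a b" "kmeet a b \<le> b" "a \<le> kjoin a b" "kjoin a b \<le> b"
  using kmeet_tmono[OF order_refl assms, of a] kmeet_tmono[OF assms order_refl, of b]
    kjoin_tmono[OF order_refl assms, of a] kjoin_tmono[OF assms order_refl, of b]
  by (simp_all add: kmeet_idem kjoin_idem)

lemma L3: assumes "a \<le> b" shows "inf (kmeet a b) (kjoin a b) = a" "sup (kmeet a b) (kjoin a b) = b"
proof -
  have "inf (kmeet a b) (kjoin a b) = kjoin (inf (kmeet a b) a) (inf (kmeet a b) b)"
    by (rule inf_kjoin_distr)
  also have "\<dots> = kjoin a (kmeet a b)"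
    using L2[OF assms] by (simp add: inf_absorb1 inf_absorb2)
  finally show "inf (kmeet a b) (kjoin a b) = a" by (simp add: kjoin_kmeet_absorb)
  have "sup (kmeet a b) (kjoin a b) = kjoin (sup (kmeet a b) a) (sup (kmeet a b) b)"
    by (rule sup_kjoin_distr)
  also have "\<dots> = kjoin (kmeet a b) b"
    using L2[OF assms] by (simp add: sup_absorb1 sup_absorb2)
  finally show "sup (kmeet a b) (kjoin a b) = b" by (simp add: kjoin_absorb kmeet_lower2)
qed


lemma kSup_const: "G \<noteq> {} \<Longrightarrow> kSup ((\<lambda>_. a) ` G) = a"
  by (rule kle_antisym) (auto intro!: kSup_least kSup_upper kle_refl)

lemma kInf_const: "G \<noteq> {} \<Longrightarrow> kInf ((\<lambda>_. a) ` G) = a"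
  by (rule kle_antisym) (auto intro!: kInf_greatest kInf_lower kle_refl)

lemma Sup_reindex2:
  fixes f g :: "'i \<Rightarrow> 'a"
  shows "Sup ((\<lambda>a. Sup (g ` {i\<in>I. f i = a})) ` f ` I) = Sup (g ` I)"
proof (rule order.antisym)
  show "Sup ((\<lambda>a. Sup (g ` {i\<in>I. f i = a})) ` f ` I) \<le> Sup (g ` I)"
    by (rule Sup_least) (auto intro!: Sup_least intro: Sup_upper)
  show "Sup (g ` I) \<le> Sup ((\<lambda>a. Sup (g ` {i\<in>I. f i = a})) ` f ` I)"
  proof (rule Sup_least)
    fix x assume "x \<in> g ` I"
    then obtain i where i: "i \<in> I" "x = g i" by auto
    have "g i \<le> Sup (g ` {j\<in>I. f j = f i})" by (rule Sup_upper) (use i in auto)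
    moreover have "Sup (g ` {j\<in>I. f j = f i}) \<le> Sup ((\<lambda>a. Sup (g ` {i\<in>I. f i = a})) ` f ` I)"
      by (rule Sup_upper) (use i in auto)
    ultimately show "x \<le> Sup ((\<lambda>a. Sup (g ` {i\<in>I. f i = a})) ` f ` I)"
      using i order.trans by blast
  qed
qed

lemma Inf_reindex2:
  fixes f g :: "'i \<Rightarrow> 'a"
  shows "Inf ((\<lambda>a. Inf (g ` {i\<in>I. f i = a})) ` f ` I) = Inf (g ` I)"
proof (rule order.antisym)
  show "Inf (g ` I) \<le> Inf ((\<lambda>a. Inf (g ` {i\<in>I. f i = a})) ` f ` I)"
    by (rule Inf_greatest) (auto intro!: Inf_greatest intro: Inf_lower)
  show "Inf ((\<lambda>a. Inf (g ` {i\<in>I. f i = a})) ` f ` I) \<le> Inf (g ` I)"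
  proof (rule Inf_greatest)
    fix x assume "x \<in> g ` I"
    then obtain i where i: "i \<in> I" "x = g i" by auto
    have "Inf (g ` {j\<in>I. f j = f i}) \<le> g i" by (rule Inf_lower) (use i in auto)
    moreover have "Inf ((\<lambda>a. Inf (g ` {i\<in>I. f i = a})) ` f ` I) \<le> Inf (g ` {j\<in>I. f j = f i})"
      by (rule Inf_lower) (use i in auto)
    ultimately show "Inf ((\<lambda>a. Inf (g ` {i\<in>I. f i = a})) ` f ` I) \<le> x"
      using i order.trans by blast
  qed
qed

lemma Sup_kmono_gen:
  fixes f g :: "'i \<Rightarrow> 'a"
  assumes "\<And>i. i \<in> I \<Longrightarrow> kle (f i) (g i)"
  shows "kle (Sup (f ` I)) (Sup (g ` I))"
proof -
  define h where "h a = Sup (g ` {i\<in>I. f i = a})" for a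
  have 1: "kle a (h a)" if "a \<in> f ` I" for a
  proof -
    define G where "G = g ` {i\<in>I. f i = a}"
    have "G \<noteq> {}" using that G_def by auto
    have "kle (Sup ((\<lambda>_. a) ` G)) (Sup (id ` G))"
      by (rule Sup_kmono) (use assms in \<open>auto simp: G_def\<close>)
    thus ?thesis using \<open>G \<noteq> {}\<close> by (simp add: h_def G_def[symmetric])
  qed
  have "kle (Sup (id ` f ` I)) (Sup (h ` f ` I))" by (rule Sup_kmono) (simp add: 1)
  moreover have "Sup (h ` f ` I) = Sup (g ` I)" unfolding h_def by (rule Sup_reindex2)
  ultimately show ?thesis by (simp add: image_image)
qed

lemma Inf_kmono_gen:
  fixes f g :: "'i \<Rightarrow> 'a"
  assumes "\<And>i. i \<in> I \<Longrightarrow> kle (f i) (g i)"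
  shows "kle (Inf (f ` I)) (Inf (g ` I))"
proof -
  define h where "h a = Inf (f ` {i\<in>I. g i = a})" for a
  have 1: "kle (h a) a" if "a \<in> g ` I" for a
  proof -
    define G where "G = f ` {i\<in>I. g i = a}"
    have "G \<noteq> {}" using that G_def by auto
    have "kle (Inf (id ` G)) (Inf ((\<lambda>_. a) ` G))"
      by (rule Inf_kmono) (use assms in \<open>auto simp: G_def\<close>)
    thus ?thesis using \<open>G \<noteq> {}\<close> by (simp add: h_def G_def[symmetric])
  qed
  have "kle (Inf (h ` g ` I)) (Inf (id ` g ` I))" by (rule Inf_kmono) (simp add: 1)
  moreover have "Inf (h ` g ` I) = Inf (f ` I)" unfolding h_def by (rule Inf_reindex2)
  ultimately show ?thesis by (simp add: image_image)
qed

lemma kSup_reindex: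
  fixes f g :: "'i \<Rightarrow> 'a"
  shows "kSup ((\<lambda>a. kSup (g ` {i\<in>I. f i = a})) ` f ` I) = kSup (g ` I)"
proof (rule kle_antisym)
  show "kle (kSup ((\<lambda>a. kSup (g ` {i\<in>I. f i = a})) ` f ` I)) (kSup (g ` I))"
    by (rule kSup_least) (auto intro!: kSup_least intro: kSup_upper)
  show "kle (kSup (g ` I)) (kSup ((\<lambda>a. kSup (g ` {i\<in>I. f i = a})) ` f ` I))"
  proof (rule kSup_least)
    fix x assume "x \<in> g ` I"
    then obtain i where i: "i \<in> I" "x = g i" by auto
    have "kle (g i) (kSup (g ` {j\<in>I. f j = f i}))" by (rule kSup_upper) (use i in auto)
    moreover have "kle (kSup (g ` {j\<in>I. f j = f i})) (kSup ((\<lambda>a. kSup (g ` {i\<in>I. f i = a})) ` f ` I))"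
      by (rule kSup_upper) (use i in auto)
    ultimately show "kle x (kSup ((\<lambda>a. kSup (g ` {i\<in>I. f i = a})) ` f ` I))"
      using i kle_trans by blast
  qed
qed

lemma kInf_reindex:
  fixes f g :: "'i \<Rightarrow> 'a"
  shows "kInf ((\<lambda>a. kInf (g ` {i\<in>I. f i = a})) ` f ` I) = kInf (g ` I)"
proof (rule kle_antisym)
  show "kle (kInf (g ` I)) (kInf ((\<lambda>a. kInf (g ` {i\<in>I. f i = a})) ` f ` I))"
    by (rule kInf_greatest) (auto intro!: kInf_greatest intro: kInf_lower)
  show "kle (kInf ((\<lambda>a. kInf (g ` {i\<in>I. f i = a})) ` f ` I)) (kInf (g ` I))"
  proof (rule kInf_greatest)
    fix x assume "x \<in> g ` I"
    then obtain i where i: "i \<in> I" "x = g i" by auto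
    have "kle (kInf (g ` {j\<in>I. f j = f i})) (g i)" by (rule kInf_lower) (use i in auto)
    moreover have "kle (kInf ((\<lambda>a. kInf (g ` {i\<in>I. f i = a})) ` f ` I)) (kInf (g ` {j\<in>I. f j = f i}))"
      by (rule kInf_lower) (use i in auto)
    ultimately show "kle (kInf ((\<lambda>a. kInf (g ` {i\<in>I. f i = a})) ` f ` I)) x"
      using i kle_trans by blast
  qed
qed

lemma kSup_tmono_gen:
  fixes f g :: "'i \<Rightarrow> 'a"
  assumes "\<And>i. i \<in> I \<Longrightarrow> f i \<le> g i"
  shows "kSup (f ` I) \<le> kSup (g ` I)"
proof -
  define h where "h a = kSup (g ` {i\<in>I. f i = a})" for a
  have 1: "a \<le> h a" if "a \<in> f ` I" for a
  proof -
    define G where "G = g ` {i\<in>I. f i = a}"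
    have "G \<noteq> {}" using that G_def by auto
    have "kSup ((\<lambda>_. a) ` G) \<le> kSup (id ` G)"
      by (rule kSup_tmono) (use assms in \<open>auto simp: G_def\<close>)
    thus ?thesis using \<open>G \<noteq> {}\<close> by (simp add: h_def G_def[symmetric] kSup_const)
  qed
  have "kSup (id ` f ` I) \<le> kSup (h ` f ` I)" by (rule kSup_tmono) (simp add: 1)
  moreover have "kSup (h ` f ` I) = kSup (g ` I)" unfolding h_def by (rule kSup_reindex)
  ultimately show ?thesis by (simp add: image_image)
qed

lemma kInf_tmono_gen:
  fixes f g :: "'i \<Rightarrow> 'a"
  assumes "\<And>i. i \<in> I \<Longrightarrow> f i \<le> g i"
  shows "kInf (f ` I) \<le> kInf (g ` I)"
proof -
  define h where "h a = kInf (f ` {i\<in>I. g i = a})" for a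
  have 1: "h a \<le> a" if "a \<in> g ` I" for a
  proof -
    define G where "G = f ` {i\<in>I. g i = a}"
    have "G \<noteq> {}" using that G_def by auto
    have "kInf (id ` G) \<le> kInf ((\<lambda>_. a) ` G)"
      by (rule kInf_tmono) (use assms in \<open>auto simp: G_def\<close>)
    thus ?thesis using \<open>G \<noteq> {}\<close> by (simp add: h_def G_def[symmetric] kInf_const)
  qed
  have "kInf (h ` g ` I) \<le> kInf (id ` g ` I)" by (rule kInf_tmono) (simp add: 1)
  moreover have "kInf (h ` g ` I) = kInf (f ` I)" unfolding h_def by (rule kInf_reindex)
  ultimately show ?thesis by (simp add: image_image)
qed

end


section \<open>Relation-based complete lattices\<close>

definition rlfp :: "('a \<Rightarrow> 'a \<Rightarrow> bool) \<Rightarrow> ('a set \<Rightarrow> 'a) \<Rightarrow> ('a \<Rightarrow> 'a) \<Rightarrow> 'a" where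
  "rlfp le I f = I {x. le (f x) x}"

locale rlat =
  fixes le :: "'a \<Rightarrow> 'a \<Rightarrow> bool" and Inf' :: "'a set \<Rightarrow> 'a" and Sup' :: "'a set \<Rightarrow> 'a"
  assumes refl: "le x x" and trans: "le x y \<Longrightarrow> le y z \<Longrightarrow> le x z"
    and antisym: "le x y \<Longrightarrow> le y x \<Longrightarrow> x = y"
    and Inf_lower: "x \<in> S \<Longrightarrow> le (Inf' S) x"
    and Inf_greatest: "(\<And>x. x \<in> S \<Longrightarrow> le z x) \<Longrightarrow> le z (Inf' S)"
    and Sup_upper: "x \<in> S \<Longrightarrow> le x (Sup' S)"
    and Sup_least: "(\<And>x. x \<in> S \<Longrightarrow> le x z) \<Longrightarrow> le (Sup' S) z"
begin

lemma rlfp_lower: "le (f x) x \<Longrightarrow> le (rlfp le Inf' f) x"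
  unfolding rlfp_def by (rule Inf_lower) simp

lemma rlfp_fix:
  assumes mf: "\<And>x y. le x y \<Longrightarrow> le (f x) (f y)"
  shows "f (rlfp le Inf' f) = rlfp le Inf' f"
proof -
  let ?X = "rlfp le Inf' f"
  have a: "le (f ?X) ?X"
    unfolding rlfp_def
  proof (rule Inf_greatest)
    fix x assume x: "x \<in> {x. le (f x) x}"
    hence fx: "le (f x) x" by simp
    have "le (Inf' {x. le (f x) x}) x" using x by (rule Inf_lower)
    hence "le (f (Inf' {x. le (f x) x})) (f x)" by (rule mf)
    thus "le (f (Inf' {x. le (f x) x})) x" using fx by (rule trans)
  qed
  have "le ?X (f ?X)" by (rule rlfp_lower, rule mf, rule a)
  with a show ?thesis by (rule antisym)
qed

lemma rlfp_least: "f y = y \<Longrightarrow> le (rlfp le Inf' f) y"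
  by (rule rlfp_lower) (simp add: refl)

lemma least_fp_rlfp:
  assumes mf: "\<And>x y. le x y \<Longrightarrow> le (f x) (f y)"
  shows "least_fp le f = rlfp le Inf' f"
  unfolding least_fp_def
proof (rule the_equality)
  show "f (rlfp le Inf' f) = rlfp le Inf' f \<and> (\<forall>y. f y = y \<longrightarrow> le (rlfp le Inf' f) y)"
    using rlfp_fix[of f, OF mf] rlfp_least[of f] by simp
next
  fix x assume x: "f x = x \<and> (\<forall>y. f y = y \<longrightarrow> le x y)"
  have "le x (rlfp le Inf' f)" using x rlfp_fix[of f, OF mf] by simp
  moreover have "le (rlfp le Inf' f) x" using x rlfp_least[of f x] by simp
  ultimately show "x = rlfp le Inf' f" by (rule antisym)
qed

lemma rel_induct:
  assumes monof: "\<And>x y. le x y \<Longrightarrow> le (f x) (f y)"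
    and monog: "\<And>x y. le x y \<Longrightarrow> le (g x) (g y)"
    and step: "\<And>x y. R x y \<Longrightarrow> R (f x) (g y)"
    and lim: "\<And>M. (\<And>p. p \<in> M \<Longrightarrow> R (fst p) (snd p)) \<Longrightarrow> R (Sup' (fst ` M)) (Sup' (snd ` M))"
  shows "R (rlfp le Inf' f) (rlfp le Inf' g)"
proof -
  define X where "X = rlfp le Inf' f"
  define Y where "Y = rlfp le Inf' g"
  define M where "M = {p. le (fst p) X \<and> le (snd p) Y \<and> R (fst p) (snd p)}"
  define xs where "xs = Sup' (fst ` M)"
  define ys where "ys = Sup' (snd ` M)"
  have R: "R xs ys" unfolding xs_def ys_def by (rule lim) (simp add: M_def)
  have "le xs X" unfolding xs_def by (rule Sup_least) (auto simp: M_def)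
  hence "le (f xs) X" using monof rlfp_fix[of f, OF monof] X_def by metis
  have "le ys Y" unfolding ys_def by (rule Sup_least) (auto simp: M_def)
  hence "le (g ys) Y" using monog rlfp_fix[of g, OF monog] Y_def by metis
  have inM: "(f xs, g ys) \<in> M" using \<open>le (f xs) X\<close> \<open>le (g ys) Y\<close> step[OF R] by (simp add: M_def)
  have "le (f xs) xs" using Sup_upper[of "f xs" "fst ` M"] inM unfolding xs_def[symmetric] by force
  hence "le X xs" unfolding X_def by (rule rlfp_lower)
  hence "X = xs" using \<open>le xs X\<close> antisym by blast
  have "le (g ys) ys" using Sup_upper[of "g ys" "snd ` M"] inM unfolding ys_def[symmetric] by force
  hence "le Y ys" unfolding Y_def by (rule rlfp_lower)
  hence "Y = ys" using \<open>le ys Y\<close> antisym by blast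
  show ?thesis using R \<open>X = xs\<close> \<open>Y = ys\<close> X_def Y_def by simp
qed

end

lemma rlat_dual: assumes "rlat le I S" shows "rlat (\<lambda>x y. le y x) S I"
proof -
  interpret r: rlat le I S by (rule assms)
  show ?thesis
    by unfold_locales (auto intro: r.refl r.antisym r.Inf_lower r.Inf_greatest r.Sup_upper r.Sup_least
       dest: r.trans)
qed

lemma rlat_t: "rlat (\<le>) (Inf :: ('a::complete_lattice) set \<Rightarrow> 'a) Sup"
  by unfold_locales (auto intro: Inf_lower Inf_greatest Sup_upper Sup_least)

definition vkInf :: "('a \<Rightarrow> 'b::complete_interlaced_bilattice) set \<Rightarrow> 'a \<Rightarrow> 'b" where
  "vkInf S = (\<lambda>A. kInf ((\<lambda>v. v A) ` S))"

definition vkSup :: "('a \<Rightarrow> 'b::complete_interlaced_bilattice) set \<Rightarrow> 'a \<Rightarrow> 'b" where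
  "vkSup S = (\<lambda>A. kSup ((\<lambda>v. v A) ` S))"

lemma rlat_k: "rlat (vkle :: ('a \<Rightarrow> 'b::complete_interlaced_bilattice) \<Rightarrow> _) vkInf vkSup"
  by unfold_locales
    (auto simp: vkle_def vkInf_def vkSup_def intro: kle_refl kle_trans kle_antisym ext
      intro!: ext[OF kle_antisym]
      kInf_lower kInf_greatest kSup_upper kSup_least)

lemma greatest_fp_least: "greatest_fp R f = least_fp (\<lambda>x y. R y x) f"
  by (simp add: greatest_fp_def least_fp_def)

section \<open>Monotonicity of the semantics\<close>

lemma cev_tmono: "v \<le> v' \<Longrightarrow> w' \<le> w \<Longrightarrow> cev v w \<sigma> \<phi> \<le> cev v' w' \<sigma> \<phi>"
proof (induction \<phi> arbitrary: \<sigma>)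
  case (FEx x a) thus ?case by (auto intro!: SUP_mono')
next
  case (FAll x a) thus ?case by (auto intro!: INF_mono')
qed (auto simp: le_fun_def intro: neg_tanti inf_mono sup_mono le_infI1 le_infI2 le_supI1 le_supI2 kmeet_tmono kjoin_tmono)

lemma cev_kmono: "vkle v v' \<Longrightarrow> vkle w w' \<Longrightarrow> kle (cev v w \<sigma> \<phi>) (cev v' w' \<sigma> \<phi>)"
proof (induction \<phi> arbitrary: \<sigma>)
  case (FEx x a) thus ?case using Sup_kmono_gen[of UNIV "\<lambda>g. cev v w (\<sigma>(x := g)) a" "\<lambda>g. cev v' w' (\<sigma>(x := g)) a"] by simp
next
  case (FAll x a) thus ?case using Inf_kmono_gen[of UNIV "\<lambda>g. cev v w (\<sigma>(x := g)) a" "\<lambda>g. cev v' w' (\<sigma>(x := g)) a"] by simp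
qed (auto simp: vkle_def intro: neg_kmono inf_kmono sup_kmono kmeet_kmono kjoin_kmono kle_refl)

lemma Psi_tmono: "x \<le> x' \<Longrightarrow> v' \<le> v \<Longrightarrow> Psi P m x v \<le> Psi P m x' v'"
  unfolding le_fun_def[of "Psi P m x v"] Psi_def
  by (auto simp: Let_def split: prod.splits intro: cev_tmono)

lemma Psi_kmono: "vkle x x' \<Longrightarrow> vkle v v' \<Longrightarrow> vkle (Psi P m x v) (Psi P m x' v')"
  unfolding vkle_def[of "Psi P m x v"] Psi_def
  by (auto simp: Let_def kle_refl split: prod.splits intro: cev_kmono)


lemma vkle_refl: "vkle v v" by (simp add: vkle_def kle_refl)

lemma vkle_antisym: "vkle x y \<Longrightarrow> vkle y x \<Longrightarrow> x = y"
  by (auto simp: vkle_def intro!: ext kle_antisym)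

lemma vkle_Sup_pairs:
  "(\<And>p. p \<in> M \<Longrightarrow> vkle (fst p) (snd p)) \<Longrightarrow> vkle (Sup (fst ` M)) (Sup (snd ` M))"
  unfolding vkle_def Sup_apply image_image by (auto intro!: Sup_kmono_gen)

lemma vkle_Inf_pairs:
  "(\<And>p. p \<in> M \<Longrightarrow> vkle (fst p) (snd p)) \<Longrightarrow> vkle (Inf (fst ` M)) (Inf (snd ` M))"
  unfolding vkle_def Inf_apply image_image by (auto intro!: Inf_kmono_gen)

lemma vkle_vkSup_pairs:
  assumes "\<And>p. p \<in> M \<Longrightarrow> vkle (fst p) (snd p)"
  shows "vkle (vkSup (fst ` M)) (vkSup (snd ` M))"
  unfolding vkle_def vkSup_def image_image
proof (intro allI kSup_least)
  fix A x assume "x \<in> (\<lambda>p. fst p A) ` M"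
  then obtain p where p: "p \<in> M" "x = fst p A" by auto
  have "kle (fst p A) (snd p A)" using assms[OF p(1)] by (simp add: vkle_def)
  moreover have "kle (snd p A) (kSup ((\<lambda>p. snd p A) ` M))" by (rule kSup_upper) (use p in auto)
  ultimately show "kle x (kSup ((\<lambda>p. snd p A) ` M))" using p kle_trans by blast
qed

lemma vkle_vkInf_pairs:
  assumes "\<And>p. p \<in> M \<Longrightarrow> vkle (fst p) (snd p)"
  shows "vkle (vkInf (fst ` M)) (vkInf (snd ` M))"
  unfolding vkle_def vkInf_def image_image
proof (intro allI kInf_greatest)
  fix A x assume "x \<in> (\<lambda>p. snd p A) ` M"
  then obtain p where p: "p \<in> M" "x = snd p A" by auto
  have "kle (fst p A) (snd p A)" using assms[OF p(1)] by (simp add: vkle_def)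
  moreover have "kle (kInf ((\<lambda>p. fst p A) ` M)) (fst p A)" by (rule kInf_lower) (use p in auto)
  ultimately show "kle (kInf ((\<lambda>p. fst p A) ` M)) x" using p kle_trans by blast
qed

lemma le_vkSup_pairs:
  "(\<And>p. p \<in> M \<Longrightarrow> fst p \<le> snd p) \<Longrightarrow> vkSup (fst ` M) \<le> vkSup (snd ` M)"
  unfolding le_fun_def vkSup_def image_image by (auto intro!: kSup_tmono_gen)

lemma le_vkInf_pairs:
  "(\<And>p. p \<in> M \<Longrightarrow> fst p \<le> snd p) \<Longrightarrow> vkInf (fst ` M) \<le> vkInf (snd ` M)"
  unfolding le_fun_def vkInf_def image_image by (auto intro!: kInf_tmono_gen)

lemma le_Sup_pairs:
  "(\<And>p. p \<in> M \<Longrightarrow> fst p \<le> snd p) \<Longrightarrow> Sup (fst ` M) \<le> (Sup (snd ` M) :: 'a::complete_lattice)"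
  by (auto intro!: SUP_mono)

lemma le_Inf_pairs:
  "(\<And>p. p \<in> M \<Longrightarrow> fst p \<le> snd p) \<Longrightarrow> Inf (fst ` M) \<le> (Inf (snd ` M) :: 'a::complete_lattice)"
  by (auto intro!: INF_mono)

lemma Psi'_F: "Psi' P mF v = rlfp (\<le>) Inf (\<lambda>x. Psi P mF x v)"
  unfolding Psi'.simps by (rule rlat.least_fp_rlfp[OF rlat_t]) (simp add: Psi_tmono)

lemma Psi'_T: "Psi' P mT v = rlfp (\<lambda>x y. y \<le> x) Sup (\<lambda>x. Psi P mT x v)"
  unfolding Psi'.simps greatest_fp_least
  by (rule rlat.least_fp_rlfp[OF rlat_dual[OF rlat_t]]) (simp add: Psi_tmono)

lemma Psi'_U: "Psi' P mU v = rlfp vkle vkInf (\<lambda>x. Psi P mU x v)"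
  unfolding Psi'.simps by (rule rlat.least_fp_rlfp[OF rlat_k]) (simp add: Psi_kmono vkle_refl)

lemma Psi'_I: "Psi' P mI v = rlfp (\<lambda>x y. vkle y x) vkSup (\<lambda>x. Psi P mI x v)"
  unfolding Psi'.simps greatest_fp_least
  by (rule rlat.least_fp_rlfp[OF rlat_dual[OF rlat_k]]) (simp add: Psi_kmono vkle_refl)

lemma Psi'_kmono: assumes "vkle v v'" shows "vkle (Psi' P m v) (Psi' P m v')"
proof (cases m)
  case mF
  show ?thesis unfolding mF Psi'_F
    by (rule rlat.rel_induct[OF rlat_t, where R=vkle])
      (auto intro: Psi_tmono Psi_kmono assms vkle_Sup_pairs)
next
  case mT
  show ?thesis unfolding mT Psi'_T
    by (rule rlat.rel_induct[OF rlat_dual[OF rlat_t], where R=vkle])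
      (auto intro: Psi_tmono Psi_kmono assms vkle_Inf_pairs)
next
  case mU
  show ?thesis unfolding mU Psi'_U
    by (rule rlat.rel_induct[OF rlat_k, where R=vkle])
      (auto intro: Psi_kmono vkle_refl assms vkle_vkSup_pairs)
next
  case mI
  show ?thesis unfolding mI Psi'_I
    by (rule rlat.rel_induct[OF rlat_dual[OF rlat_k], where R=vkle])
      (auto intro: Psi_kmono vkle_refl assms vkle_vkInf_pairs)
qed

lemma Psi'_tanti: assumes "v \<le> v'" shows "Psi' P m v' \<le> Psi' P m v"
proof (cases m)
  case mF
  show ?thesis unfolding mF Psi'_F
    by (rule rlat.rel_induct[OF rlat_t, where R="(\<le>)"])
      (auto intro: Psi_tmono assms le_Sup_pairs)
next
  case mT
  show ?thesis unfolding mT Psi'_T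
    by (rule rlat.rel_induct[OF rlat_dual[OF rlat_t], where R="(\<le>)"])
      (auto intro: Psi_tmono assms le_Inf_pairs)
next
  case mU
  show ?thesis unfolding mU Psi'_U
    by (rule rlat.rel_induct[OF rlat_k, where R="(\<le>)"])
      (auto intro: Psi_kmono Psi_tmono vkle_refl assms le_vkSup_pairs)
next
  case mI
  show ?thesis unfolding mI Psi'_I
    by (rule rlat.rel_induct[OF rlat_dual[OF rlat_k], where R="(\<le>)"])
      (auto intro: Psi_kmono Psi_tmono vkle_refl assms le_vkInf_pairs)
qed


lemma least_fp_eq:
  "f x = x \<Longrightarrow> (\<And>y. f y = y \<Longrightarrow> R x y) \<Longrightarrow> (\<And>x y. R x y \<Longrightarrow> R y x \<Longrightarrow> x = y) \<Longrightarrow> least_fp R f = x"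
  unfolding least_fp_def by (rule the_equality) auto

lemma greatest_fp_eq:
  "f x = x \<Longrightarrow> (\<And>y. f y = y \<Longrightarrow> R y x) \<Longrightarrow> (\<And>x y. R x y \<Longrightarrow> R y x \<Longrightarrow> x = y) \<Longrightarrow> greatest_fp R f = x"
  unfolding greatest_fp_def by (rule the_equality) auto

lemma main_abstract:
  fixes f :: "('a \<Rightarrow> 'b::complete_interlaced_bilattice) \<Rightarrow> ('a \<Rightarrow> 'b)"
  assumes km: "\<And>x y. vkle x y \<Longrightarrow> vkle (f x) (f y)"
    and ta: "\<And>x y. x \<le> y \<Longrightarrow> f y \<le> f x"
  shows "least_fp vkle f = vkmeet (least_fp (\<le>) (f \<circ> f)) (greatest_fp (\<le>) (f \<circ> f))
      \<and> greatest_fp vkle f = vkjoin (least_fp (\<le>) (f \<circ> f)) (greatest_fp (\<le>) (f \<circ> f))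
      \<and> least_fp (\<le>) (f \<circ> f) = inf (least_fp vkle f) (greatest_fp vkle f)
      \<and> greatest_fp (\<le>) (f \<circ> f) = sup (least_fp vkle f) (greatest_fp vkle f)"
proof -
  have mff: "mono (f \<circ> f)" by (auto intro!: monoI ta)
  define a where "a = lfp (f \<circ> f)"
  define b where "b = gfp (f \<circ> f)"
  have afix: "f (f a) = a" using lfp_fixpoint[OF mff] by (simp add: a_def)
  have bfix: "f (f b) = b" using gfp_fixpoint[OF mff] by (simp add: b_def)
  have lowa: "f (f y) = y \<Longrightarrow> a \<le> y" for y unfolding a_def by (rule lfp_lowerbound) simp
  have upb: "f (f y) = y \<Longrightarrow> y \<le> b" for y unfolding b_def by (rule gfp_upperbound) simp
  have a_eq: "least_fp (\<le>) (f \<circ> f) = a"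
    by (rule least_fp_eq) (auto simp: afix intro: lowa)
  have b_eq: "greatest_fp (\<le>) (f \<circ> f) = b"
    by (rule greatest_fp_eq) (auto simp: bfix intro: upb)
  have "f a \<le> b" by (rule upb) (simp add: afix)
  have "a \<le> f b" by (rule lowa) (simp add: bfix)
  have fa: "f a = b"
    using \<open>f a \<le> b\<close> ta[OF \<open>a \<le> f b\<close>] bfix by (simp add: order.antisym)
  have fb: "f b = a"
    using \<open>a \<le> f b\<close> ta[OF \<open>f a \<le> b\<close>] afix by (simp add: order.antisym)
  have ab: "a \<le> b" by (rule upb) (rule afix)
  define u where "u = vkmeet a b"
  define w where "w = vkjoin a b"
  have au: "a \<le> u" "u \<le> b" "a \<le> w" "w \<le> b"
    using ab by (auto simp: u_def w_def vkmeet_def vkjoin_def le_fun_def intro: L2)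
  have L1v: "a \<le> y \<Longrightarrow> y \<le> b \<Longrightarrow> vkle u y" for y
    by (auto simp: u_def vkmeet_def vkle_def le_fun_def intro: L1)
  have L1'v: "a \<le> y \<Longrightarrow> y \<le> b \<Longrightarrow> vkle y w" for y
    by (auto simp: w_def vkjoin_def vkle_def le_fun_def intro: L1')
  have ufix: "f u = u"
  proof (rule vkle_antisym)
    have "vkle u a" "vkle u b" by (auto simp: u_def vkmeet_def vkle_def kmeet_lower1 kmeet_lower2)
    hence "vkle (f u) b" "vkle (f u) a" using km fa fb by metis+
    thus "vkle (f u) u" by (auto simp: u_def vkmeet_def vkle_def intro: kmeet_greatest)
    have "f u \<le> b" using ta[OF au(1)] fa by simp
    moreover have "a \<le> f u" using ta[OF au(2)] fb by simp
    ultimately show "vkle u (f u)" by (rule L1v[rotated])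
  qed
  have wfix: "f w = w"
  proof (rule vkle_antisym)
    have "vkle a w" "vkle b w" by (auto simp: w_def vkjoin_def vkle_def kjoin_upper1 kjoin_upper2)
    hence "vkle b (f w)" "vkle a (f w)" using km fa fb by metis+
    thus "vkle w (f w)" by (auto simp: w_def vkjoin_def vkle_def intro: kjoin_least)
    have "f w \<le> b" using ta[OF au(3)] fa by simp
    moreover have "a \<le> f w" using ta[OF au(4)] fb by simp
    ultimately show "vkle (f w) w" by (rule L1'v[rotated])
  qed
  have U: "least_fp vkle f = u"
  proof (rule least_fp_eq[of f u, OF ufix])
    fix y assume "f y = y"
    hence "f (f y) = y" by simp
    thus "vkle u y" using lowa upb L1v by blast
  qed (rule vkle_antisym)
  have I: "greatest_fp vkle f = w"
  proof (rule greatest_fp_eq[of f w, OF wfix])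
    fix y assume "f y = y"
    hence "f (f y) = y" by simp
    thus "vkle y w" using lowa upb L1'v by blast
  qed (rule vkle_antisym)
  have "inf u w = a" using ab by (auto intro!: ext L3(1) simp: u_def w_def vkmeet_def vkjoin_def le_fun_def)
  moreover have "sup u w = b" using ab by (auto intro!: ext L3(2) simp: u_def w_def vkmeet_def vkjoin_def le_fun_def)
  ultimately show ?thesis using U I a_eq b_eq u_def w_def by simp
qed

theorem theorem3:
  fixes P :: "('p, 'f, 'b::complete_interlaced_bilattice) clause set"
    and m :: mode
  assumes "fitting_program P"
  shows "FixU P m = vkmeet (FixF P m) (FixT P m)
         \<and> FixI P m = vkjoin (FixF P m) (FixT P m)
         \<and> FixF P m = inf (FixU P m) (FixI P m)
         \<and> FixT P m = sup (FixU P m) (FixI P m)"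
  unfolding FixU_def FixI_def FixF_def FixT_def
  by (rule main_abstract) (auto intro: Psi'_kmono Psi'_tanti)

end
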